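(* In the setting below, let $\tilde B_\circ$ be the $m\times n$ extended exchange matrix of the initial seed $(\mathbf{x}(t_\circ),\mathbf{y}(t_\circ),B(t_\circ))$ of the original pattern. Then the new initial seed $(\bar{\mathbf x}(t_\circ),\bar{\mathbf y}(t_\circ),B(t_\circ))$ has extended exchange matrix $\overline{\tilde B}_\circ=\Psi\tilde B_\circ$, where $\Psi=(\psi_{ij})$ is the $\bar m\times m$ integer matrix defined by $\psi(x_j)=\prod_{i=1}^{\bar m}\bar x_i^{\psi_{ij}}$. Setting: $n\le m$, $n\le\bar m$; $\mathcal F,\bar{\mathcal F}$ are the fields of rational functions in $x_1,\dots,x_m$ and $\bar x_1,\dots,\bar x_{\bar m}$; $\varphi:\mathbb{Q}_{\mathrm{sf}}(x_1,\dots,x_m)\to\mathrm{Trop}(\bar x_{n+1},\dots,\bar x_{\bar m})$ is a semifield homomorphism; $\psi:\mathbb{Q}_{\mathrm{sf}}(x_1,\dots,x_m)\to\mathbb{Q}_{\mathrm{sf}}(\bar x_1,\dots,\bar x_{\bar m})$ is the semifield homomorphism with $\psi(x_i)=\bar x_i\varphi(x_i)$ for $i\le n$, $\psi(x_i)=\varphi(x_i)$ for $i>n$; $(\mathbf{x}(t),\mathbf{y}(t),B(t))_{t\in\mathbb{T}_n}$ is a seed pattern in $\mathcal F$ with frozen variables $x_{n+1},\dots,x_m$ and initial cluster $\mathbf{x}(t_\circ)=(x_1,\dots,x_n)$; and $\bar x_{i;t}=\psi(x_{i;t})/\varphi(x_{i;t})$, $\bar y_{k;t}=\varphi(y_{k;t})\prod_{i=1}^n\varphi(x_{i;t})^{b^t_{ik}}$,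 which form a seed pattern in $\bar{\mathcal F}$ with frozen variables $\bar x_{n+1},\dots,\bar x_{\bar m}$.
   Context: $\mathbb{Q}_{\mathrm{sf}}(u_1,\dots,u_l)$ is the semifield of subtraction-free rational expressions; $\mathrm{Trop}(u_1,\dots,u_l)$ is the group of Laurent monomials with $\prod u_j^{a_j}\oplus\prod u_j^{b_j}=\prod u_j^{\min(a_j,b_j)}$. A seed pattern in $\mathcal F$ with frozen variables $x_{n+1},\dots,x_m$ assigns to each vertex $t$ of the $n$-regular tree $\mathbb{T}_n$ (edges labeled $1,\dots,n$, distinct labels at each vertex) a triple $(\mathbf{x}(t),\mathbf{y}(t),B(t))$ with $\mathbf{x}(t)=(x_{1;t},\dots,x_{n;t})$ such that $x_{1;t},\dots,x_{n;t},x_{n+1},\dots,x_m$ freely generate $\mathcal F$, $\mathbf y(t)=(y_{1;t},\dots,y_{n;t})\in\mathrm{Trop}(x_{n+1},\dots,x_m)^n$, $B(t)=(b^t_{ij})$ skew-symmetrizable, related along each edge $t\overset{k}{-}t'$ by matrix mutation $\mu_k$, tropical $y$-mutation ($y_{k;t'}=y_{k;t}^{-1}$, $y_{j;t'}=y_{j;t}y_{k;t}^{\max(b^t_{kj},0)}(y_{k;t}\oplus1)^{-b^t_{kj}}$ for $j\neq k$), $x_{i;t'}=x_{i;t}$ ($i\ne k$) and $x_{k;t}x_{k;t'}=(y_{k;t}\prod_{b^t_{ik}>0}x_{i;t}^{b^t_{ik}}+\prod_{b^t_{ik}<0}x_{i;t}^{-b^t_{ik}})/(y_{k;t}\oplus1)$.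 The extended exchange matrix of a seed $(\mathbf x,\mathbf y,B)$ with frozen variables $x_{n+1},\dots,x_m$ is the $m\times n$ matrix $\tilde B=(b_{ik})$ whose top $n\times n$ part is $B$ and whose remaining entries are determined by $y_k=\prod_{i=n+1}^m x_i^{b_{ik}}$ (and analogously with $\bar m$ and $\bar x_i$ for the new pattern). *)

theory Defs
  imports Complex_Main
begin

text \<open>An element of Q_sf(x_1,...,x_N) is represented by the (positive) function it
  defines on the positive orthant; it is set to 0 outside, so that equality of
  functions is equality of rational functions.\<close>

definition pos_pt :: "nat \<Rightarrow> (nat \<Rightarrow> real) \<Rightarrow> bool" where
  "pos_pt N p \<longleftrightarrow> (\<forall>i\<in>{1..N}. p i > 0)"

definition coord :: "nat \<Rightarrow> nat \<Rightarrow> (nat \<Rightarrow> real) \<Rightarrow> real" where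
  "coord N i = (\<lambda>p. if pos_pt N p then p i else 0)"

inductive_set qsf :: "nat \<Rightarrow> ((nat \<Rightarrow> real) \<Rightarrow> real) set" for N where
  gen: "1 \<le> i \<Longrightarrow> i \<le> N \<Longrightarrow> coord N i \<in> qsf N"
| add: "f \<in> qsf N \<Longrightarrow> g \<in> qsf N \<Longrightarrow> (\<lambda>p. f p + g p) \<in> qsf N"
| mult: "f \<in> qsf N \<Longrightarrow> g \<in> qsf N \<Longrightarrow> (\<lambda>p. f p * g p) \<in> qsf N"
| divide: "f \<in> qsf N \<Longrightarrow> g \<in> qsf N \<Longrightarrow> (\<lambda>p. f p / g p) \<in> qsf N"

definition laurent_mon :: "nat \<Rightarrow> (nat \<Rightarrow> int) \<Rightarrow> (nat \<Rightarrow> real) \<Rightarrow> real" where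
  "laurent_mon N e = (\<lambda>p. if pos_pt N p then (\<Prod>i\<in>{1..N}. p i powi e i) else 0)"

text \<open>Trop(u_lo,...,u_hi): a Laurent monomial prod u_j^(a_j) is represented by its
  exponent vector a (zero outside lo..hi); multiplication is addition of exponent
  vectors and the tropical sum is the pointwise minimum.\<close>
definition trop_elems :: "nat \<Rightarrow> nat \<Rightarrow> (nat \<Rightarrow> int) set" where
  "trop_elems lo hi = {a. \<forall>j. j \<notin> {lo..hi} \<longrightarrow> a j = 0}"

definition trop_plus :: "(nat \<Rightarrow> int) \<Rightarrow> (nat \<Rightarrow> int) \<Rightarrow> nat \<Rightarrow> int" where
  "trop_plus a b = (\<lambda>j. min (a j) (b j))"

definition trop_times :: "(nat \<Rightarrow> int) \<Rightarrow> (nat \<Rightarrow> int) \<Rightarrow> nat \<Rightarrow> int" where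
  "trop_times a b = (\<lambda>j. a j + b j)"

definition trop_div :: "(nat \<Rightarrow> int) \<Rightarrow> (nat \<Rightarrow> int) \<Rightarrow> nat \<Rightarrow> int" where
  "trop_div a b = (\<lambda>j. a j - b j)"

definition trop_hom :: "nat \<Rightarrow> nat \<Rightarrow> nat \<Rightarrow> (((nat \<Rightarrow> real) \<Rightarrow> real) \<Rightarrow> (nat \<Rightarrow> int)) \<Rightarrow> bool" where
  "trop_hom N lo hi \<phi> \<longleftrightarrow>
     (\<forall>f\<in>qsf N. \<phi> f \<in> trop_elems lo hi) \<and>
     (\<forall>f\<in>qsf N. \<forall>g\<in>qsf N.
        \<phi> (\<lambda>p. f p + g p) = trop_plus (\<phi> f) (\<phi> g) \<and>
        \<phi> (\<lambda>p. f p * g p) = trop_times (\<phi> f) (\<phi> g) \<and>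
        \<phi> (\<lambda>p. f p / g p) = trop_div (\<phi> f) (\<phi> g))"

definition sf_hom :: "nat \<Rightarrow> nat \<Rightarrow> (((nat \<Rightarrow> real) \<Rightarrow> real) \<Rightarrow> ((nat \<Rightarrow> real) \<Rightarrow> real)) \<Rightarrow> bool" where
  "sf_hom N M \<psi> \<longleftrightarrow>
     (\<forall>f\<in>qsf N. \<psi> f \<in> qsf M) \<and>
     (\<forall>f\<in>qsf N. \<forall>g\<in>qsf N.
        \<psi> (\<lambda>p. f p + g p) = (\<lambda>p. \<psi> f p + \<psi> g p) \<and>
        \<psi> (\<lambda>p. f p * g p) = (\<lambda>p. \<psi> f p * \<psi> g p) \<and>
        \<psi> (\<lambda>p. f p / g p) = (\<lambda>p. \<psi> f p / \<psi> g p))"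

definition skew_symmetrizable :: "nat \<Rightarrow> (nat \<Rightarrow> nat \<Rightarrow> int) \<Rightarrow> bool" where
  "skew_symmetrizable n B \<longleftrightarrow>
     (\<exists>d :: nat \<Rightarrow> int. (\<forall>i\<in>{1..n}. d i > 0) \<and>
        (\<forall>i\<in>{1..n}. \<forall>j\<in>{1..n}. d i * B i j = - (d j * B j i)))"

text \<open>Extended exchange matrix of a seed with exchange matrix B and coefficient
  tuple y (y k = exponent vector of y_k in Trop of the frozen variables):
  top part is B, and for frozen i the entry b_ik is the exponent of x_i in y_k.\<close>
definition ext_matrix :: "nat \<Rightarrow> (nat \<Rightarrow> nat \<Rightarrow> int) \<Rightarrow> (nat \<Rightarrow> nat \<Rightarrow> int) \<Rightarrow> nat \<Rightarrow> nat \<Rightarrow> int" where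
  "ext_matrix n B y i k = (if i \<le> n then B i k else y k i)"

end

theory Submission
  imports Defs
begin


lemma powi2_inj: "(2::real) powi a = 2 powi b \<Longrightarrow> a = b"
  by (metis linorder_neqE less_irrefl power_int_strict_increasing one_less_numeral_iff semiring_norm(76))

definition pt :: "nat \<Rightarrow> nat \<Rightarrow> real" where "pt i = (\<lambda>l. if l = i then 2 else 1)"

lemma pos_pt_pt: "pos_pt N (pt i)" unfolding pos_pt_def pt_def by simp

lemma lm_pt: "i \<in> {1..N} \<Longrightarrow> laurent_mon N e (pt i) = 2 powi e i"
proof -
  assume i: "i \<in> {1..N}"
  have "(\<Prod>l\<in>{1..N}. pt i l powi e l) = (\<Prod>l\<in>{1..N}. if l = i then 2 powi e l else 1)"
    by (rule prod.cong) (auto simp: pt_def)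
  also have "\<dots> = 2 powi e i" using i by (simp add: prod.delta)
  finally show ?thesis unfolding laurent_mon_def using pos_pt_pt[of N i] by simp
qed

lemma lm_inj: "laurent_mon N a = laurent_mon N b \<Longrightarrow> i \<in> {1..N} \<Longrightarrow> a i = b i"
  by (metis lm_pt powi2_inj)

lemma coord_pt: "coord N j (pt i) = (if j = i then 2 else 1)"
  using pos_pt_pt[of N i] by (simp add: coord_def) (simp add: pt_def)

lemma th_mult: "trop_hom m lo hi \<phi> \<Longrightarrow> f \<in> qsf m \<Longrightarrow> g \<in> qsf m \<Longrightarrow> \<phi> (\<lambda>p. f p * g p) = (\<lambda>l. \<phi> f l + \<phi> g l)"
  by (simp add: trop_hom_def trop_times_def)
lemma th_div: "trop_hom m lo hi \<phi> \<Longrightarrow> f \<in> qsf m \<Longrightarrow> g \<in> qsf m \<Longrightarrow> \<phi> (\<lambda>p. f p / g p) = (\<lambda>l. \<phi> f l - \<phi> g l)"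
  by (simp add: trop_hom_def trop_div_def)

definition cpow :: "nat \<Rightarrow> nat \<Rightarrow> int \<Rightarrow> (nat \<Rightarrow> real) \<Rightarrow> real" where
  "cpow m j k = (\<lambda>p. if pos_pt m p then p j powi k else 0)"

definition onef :: "nat \<Rightarrow> (nat \<Rightarrow> real) \<Rightarrow> real" where
  "onef m = (\<lambda>p. if pos_pt m p then 1 else 0)"

lemma onef_eq: "1 \<le> m \<Longrightarrow> onef m = (\<lambda>p. coord m 1 p / coord m 1 p)"
  unfolding onef_def coord_def pos_pt_def by (rule ext) force

lemma onef: assumes "1 \<le> m" "trop_hom m lo hi \<phi>"
  shows "onef m \<in> qsf m \<and> \<phi> (onef m) = (\<lambda>l. 0)"
proof -
  have c: "coord m 1 \<in> qsf m" using assms by (intro qsf.gen) auto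
  show ?thesis unfolding onef_eq[OF assms(1)]
    using qsf.divide[OF c c] th_div[OF assms(2) c c] by simp
qed

lemma cpow_nat: assumes "1 \<le> m" "trop_hom m lo hi \<phi>" "j \<in> {1..m}"
  shows "cpow m j (int k) \<in> qsf m \<and> \<phi> (cpow m j (int k)) = (\<lambda>l. int k * \<phi> (coord m j) l)"
proof (induction k)
  case 0
  have "cpow m j (int 0) = onef m" unfolding cpow_def onef_def by (rule ext) simp
  then show ?case using onef[OF assms(1,2)] by simp
next
  case (Suc k)
  have c: "coord m j \<in> qsf m" using assms by (intro qsf.gen) auto
  have eq: "cpow m j (int (Suc k)) = (\<lambda>p. cpow m j (int k) p * coord m j p)"
  proof (rule ext)
    fix p show "cpow m j (int (Suc k)) p = cpow m j (int k) p * coord m j p"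
    proof (cases "pos_pt m p")
      case True
      then have "p j > 0" using assms(3) by (simp add: pos_pt_def)
      then have "p j powi (int k + 1) = p j powi (int k) * p j" by (simp add: power_int_add_1)
      then show ?thesis using True by (simp add: cpow_def coord_def add.commute)
    qed (simp add: cpow_def coord_def)
  qed
  have m: "(\<lambda>p. cpow m j (int k) p * coord m j p) \<in> qsf m" using Suc qsf.mult[OF _ c] by blast
  have "\<phi> (\<lambda>p. cpow m j (int k) p * coord m j p) = (\<lambda>l. \<phi> (cpow m j (int k)) l + \<phi> (coord m j) l)"
    using Suc th_mult[OF assms(2) _ c] by blast
  then show ?case unfolding eq using m Suc by (simp add: algebra_simps)
qed

lemma cpow_int: assumes "1 \<le> m" "trop_hom m lo hi \<phi>" "j \<in> {1..m}"
  shows "cpow m j k \<in> qsf m \<and> \<phi> (cpow m j k) = (\<lambda>l. k * \<phi> (coord m j) l)"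
proof (cases "k \<ge> 0")
  case True
  then show ?thesis using cpow_nat[OF assms, of "nat k"] by simp
next
  case False
  define q where "q = nat (-k)"
  have k: "k = - int q" using False q_def by simp
  have eq: "cpow m j k = (\<lambda>p. onef m p / cpow m j (int q) p)"
    by (rule ext) (auto simp: cpow_def onef_def k power_int_minus_divide)
  show ?thesis unfolding eq using cpow_nat[OF assms, of q] onef[OF assms(1,2)]
      qsf.divide th_div[OF assms(2)] by (auto simp: k)
qed

definition lmS :: "nat \<Rightarrow> nat set \<Rightarrow> (nat \<Rightarrow> int) \<Rightarrow> (nat \<Rightarrow> real) \<Rightarrow> real" where
  "lmS m S e = (\<lambda>p. if pos_pt m p then (\<Prod>j\<in>S. p j powi e j) else 0)"

lemma lmS: assumes "1 \<le> m" "trop_hom m lo hi \<phi>" "finite S"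
  shows "S \<subseteq> {1..m} \<Longrightarrow> lmS m S e \<in> qsf m \<and> \<phi> (lmS m S e) = (\<lambda>l. \<Sum>j\<in>S. e j * \<phi> (coord m j) l)"
  using assms(3)
proof (induction S rule: finite_induct)
  case empty
  have "lmS m {} e = onef m" unfolding lmS_def onef_def by (rule ext) simp
  then show ?case using onef[OF assms(1,2)] by simp
next
  case (insert j S)
  have j: "j \<in> {1..m}" using insert by auto
  have eq: "lmS m (insert j S) e = (\<lambda>p. lmS m S e p * cpow m j (e j) p)"
    by (rule ext) (simp add: lmS_def cpow_def insert mult.commute)
  show ?case unfolding eq using insert cpow_int[OF assms(1,2) j, of "e j"]
      qsf.mult th_mult[OF assms(2)] by (auto simp: algebra_simps)
qed

lemma lm_phi: assumes "1 \<le> m" "trop_hom m lo hi \<phi>"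
  shows "\<phi> (laurent_mon m e) = (\<lambda>l. \<Sum>j\<in>{1..m}. e j * \<phi> (coord m j) l)"
proof -
  have "laurent_mon m e = lmS m {1..m} e" unfolding laurent_mon_def lmS_def by (rule ext) simp
  then show ?thesis using lmS[OF assms, of "{1..m}" e] by simp
qed


theorem proposition4p3p5:
  fixes n m mb :: nat
    and \<phi> :: "((nat \<Rightarrow> real) \<Rightarrow> real) \<Rightarrow> (nat \<Rightarrow> int)"
    and \<psi> :: "((nat \<Rightarrow> real) \<Rightarrow> real) \<Rightarrow> ((nat \<Rightarrow> real) \<Rightarrow> real)"
    and B :: "nat \<Rightarrow> nat \<Rightarrow> int"
    and y :: "nat \<Rightarrow> nat \<Rightarrow> int"
    and \<Psi> :: "nat \<Rightarrow> nat \<Rightarrow> int"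
  assumes "n \<le> m" and "n \<le> mb"
    and phi: "trop_hom m (n + 1) mb \<phi>"
    and psi: "sf_hom m mb \<psi>"
    and psi_low: "\<forall>i\<in>{1..n}. \<psi> (coord m i) = (\<lambda>p. coord mb i p * laurent_mon mb (\<phi> (coord m i)) p)"
    and psi_high: "\<forall>i\<in>{n+1..m}. \<psi> (coord m i) = laurent_mon mb (\<phi> (coord m i))"
    and B: "skew_symmetrizable n B"
    and y: "\<forall>k\<in>{1..n}. y k \<in> trop_elems (n + 1) m"
    and Psi: "\<forall>j\<in>{1..m}. \<psi> (coord m j) = laurent_mon mb (\<lambda>i. \<Psi> i j)"
  shows "\<forall>i\<in>{1..mb}. \<forall>k\<in>{1..n}.
           ext_matrix n B
             (\<lambda>k'. trop_times (\<phi> (laurent_mon m (y k')))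
                     (\<lambda>j. \<Sum>i'\<in>{1..n}. B i' k' * \<phi> (coord m i') j)) i k
           = (\<Sum>j\<in>{1..m}. \<Psi> i j * ext_matrix n B y j k)"
  
proof (intro ballI)
  fix i k assume i: "i \<in> {1..mb}" and k: "k \<in> {1..n}"
  have m1: "1 \<le> m" using k assms(1) by auto
  have cq: "\<And>j. j \<in> {1..m} \<Longrightarrow> coord m j \<in> qsf m" by (intro qsf.gen) auto
  have phz: "\<And>j. j \<in> {1..m} \<Longrightarrow> i \<le> n \<Longrightarrow> \<phi> (coord m j) i = 0"
  proof -
    fix j assume j: "j \<in> {1..m}" "i \<le> n"
    have "\<phi> (coord m j) \<in> trop_elems (n+1) mb" using phi cq[OF j(1)] by (simp add: trop_hom_def)
    then show "\<phi> (coord m j) i = 0" using j(2) by (simp add: trop_elems_def)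
  qed
  have yz: "\<And>j. j \<in> {1..n} \<Longrightarrow> y k j = 0" using y k by (auto simp: trop_elems_def)
  have Plow: "\<And>j. j \<in> {1..n} \<Longrightarrow> \<Psi> i j = (if i = j then 1 else 0) + \<phi> (coord m j) i"
  proof -
    fix j assume j: "j \<in> {1..n}"
    have jm: "j \<in> {1..m}" using j assms(1) by auto
    have "laurent_mon mb (\<lambda>i. \<Psi> i j) (pt i) = \<psi> (coord m j) (pt i)" using Psi jm by simp
    also have "\<dots> = coord mb j (pt i) * laurent_mon mb (\<phi> (coord m j)) (pt i)" using psi_low j by simp
    also have "\<dots> = (if j = i then 2 else 1) * 2 powi (\<phi> (coord m j) i)" using coord_pt lm_pt[OF i] by simp
    also have "\<dots> = 2 powi ((if i = j then 1 else 0) + \<phi> (coord m j) i)"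
      using power_int_add_1'[of "2::real" "\<phi> (coord m j) i"] by (cases "j = i") (simp_all add: add.commute)
    finally show "\<Psi> i j = (if i = j then 1 else 0) + \<phi> (coord m j) i"
      using lm_pt[OF i] powi2_inj by simp
  qed
  have Phigh: "\<And>j. j \<in> {n+1..m} \<Longrightarrow> \<Psi> i j = \<phi> (coord m j) i"
  proof -
    fix j assume j: "j \<in> {n+1..m}"
    have jm: "j \<in> {1..m}" using j by auto
    have "laurent_mon mb (\<lambda>i. \<Psi> i j) = laurent_mon mb (\<phi> (coord m j))" using Psi psi_high j jm by simp
    from lm_inj[OF this i] show "\<Psi> i j = \<phi> (coord m j) i" by simp
  qed
  have split: "{1..m} = {1..n} \<union> {n+1..m}" using assms(1) by auto
  have disj: "{1..n} \<inter> {n+1..m} = {}" by auto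
  have LM: "\<phi> (laurent_mon m (y k)) i = (\<Sum>j\<in>{n+1..m}. y k j * \<phi> (coord m j) i)"
  proof -
    have "\<phi> (laurent_mon m (y k)) i = (\<Sum>j\<in>{1..m}. y k j * \<phi> (coord m j) i)"
      using lm_phi[OF m1 phi] by simp
    also have "\<dots> = (\<Sum>j\<in>{1..n}. y k j * \<phi> (coord m j) i) + (\<Sum>j\<in>{n+1..m}. y k j * \<phi> (coord m j) i)"
      unfolding split by (rule sum.union_disjoint) (use disj in auto)
    also have "(\<Sum>j\<in>{1..n}. y k j * \<phi> (coord m j) i) = 0" using yz by simp
    finally show ?thesis by simp
  qed
  have R: "(\<Sum>j\<in>{1..m}. \<Psi> i j * ext_matrix n B y j k)
     = (\<Sum>j\<in>{1..n}. \<Psi> i j * B j k) + (\<Sum>j\<in>{n+1..m}. \<Psi> i j * y k j)"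
  proof -
    have "(\<Sum>j\<in>{1..m}. \<Psi> i j * ext_matrix n B y j k)
      = (\<Sum>j\<in>{1..n}. \<Psi> i j * ext_matrix n B y j k) + (\<Sum>j\<in>{n+1..m}. \<Psi> i j * ext_matrix n B y j k)"
      unfolding split by (rule sum.union_disjoint) (use disj in auto)
    also have "(\<Sum>j\<in>{1..n}. \<Psi> i j * ext_matrix n B y j k) = (\<Sum>j\<in>{1..n}. \<Psi> i j * B j k)"
      by (rule sum.cong) (auto simp: ext_matrix_def)
    also have "(\<Sum>j\<in>{n+1..m}. \<Psi> i j * ext_matrix n B y j k) = (\<Sum>j\<in>{n+1..m}. \<Psi> i j * y k j)"
      by (rule sum.cong) (auto simp: ext_matrix_def)
    finally show ?thesis .
  qed
  have R1: "(\<Sum>j\<in>{1..n}. \<Psi> i j * B j k) = (\<Sum>j\<in>{1..n}. (if i = j then B j k else 0)) + (\<Sum>j\<in>{1..n}. B j k * \<phi> (coord m j) i)"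
  proof -
    have "(\<Sum>j\<in>{1..n}. \<Psi> i j * B j k) = (\<Sum>j\<in>{1..n}. (if i = j then B j k else 0) + B j k * \<phi> (coord m j) i)"
      by (rule sum.cong) (auto simp: Plow algebra_simps)
    then show ?thesis by (simp add: sum.distrib)
  qed
  have R2: "(\<Sum>j\<in>{n+1..m}. \<Psi> i j * y k j) = (\<Sum>j\<in>{n+1..m}. y k j * \<phi> (coord m j) i)"
    by (rule sum.cong) (auto simp: Phigh)
  show "ext_matrix n B
             (\<lambda>k'. trop_times (\<phi> (laurent_mon m (y k')))
                     (\<lambda>j. \<Sum>i'\<in>{1..n}. B i' k' * \<phi> (coord m i') j)) i k
           = (\<Sum>j\<in>{1..m}. \<Psi> i j * ext_matrix n B y j k)"
  proof (cases "i \<le> n")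
    case True
    have "(\<Sum>j\<in>{1..n}. B j k * \<phi> (coord m j) i) = 0" using phz True assms(1) by simp
    moreover have "(\<Sum>j\<in>{n+1..m}. y k j * \<phi> (coord m j) i) = 0" using phz True by simp
    moreover have "(\<Sum>j\<in>{1..n}. (if i = j then B j k else 0)) = B i k" using True i by (simp add: sum.delta)
    ultimately show ?thesis using True R R1 R2 by (simp add: ext_matrix_def)
  next
    case False
    have "(\<Sum>j\<in>{1..n}. (if i = j then B j k else 0)) = 0" using False by (simp add: sum.delta)
    then show ?thesis using False R R1 R2 LM by (simp add: ext_matrix_def trop_times_def)
  qed
qed

end
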